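(* Let $f:\mathbb{R}^\ell\times\mathbb{R}^m\to\mathbb{R}^\ell$ be $C^1$, let $\Lambda$ be a parameter shift with limits $\lambda_\pm$, and let $X$ define a stable path. Let $N\in\mathbb{N}$ be such that $\|[D_xf(X(s),\Lambda(s))]^n\|<\frac14$ for all $s\in\mathbb{R}$ and $n\ge N$. Then, for $r>0$ and $\epsilon>0$ sufficiently small, for all $n\in\{N,N+1,\ldots,N(N+1)\}$ and all $(s,x)\in\mathcal{N}_\epsilon$, $$\|D_x[\pi\circ F_r^n](s,x)\|<\tfrac12.$$
   Context: A parameter shift is a $C^1$ function $\Lambda:\mathbb{R}\to\mathbb{R}^m$ with $\lim_{s\to\pm\infty}\Lambda(s)=\lambda_\pm$ and $\lim_{s\to\pm\infty}\Lambda'(s)=0$. A stable path is given by $X:\mathbb{R}\to\mathbb{R}^\ell$ such that: $X(s)$ is a fixed point of $f(\cdot,\Lambda(s))$ for every $s$; $\{(s,X(s))\}$ is a connected curve; the limits $X_\pm=\lim_{s\to\pm\infty}X(s)$ exist and are fixed points of $f(\cdot,\lambda_\pm)$; and the spectral radius of $D_xf(X(s),\Lambda(s))$ is $<1$ for all $s\in\mathbb{R}\cup\{\pm\infty\}$. For $r\ge0$, $F_r(s,x)=(s+r,f(x,\Lambda(s)))$ and $F_r^n$ is its $n$-fold composition; $\pi(s,x)=x$, and $D_x$ is the derivative with respect to the last $\ell$ coordinates. $\mathcal{N}_\epsilon=\{(s,x):s\in\mathbb{R},\ \|x-X(s)\|\le\epsilon\}$ (Euclidean norm; matrix norms induced).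 *)

theory Defs
  imports "HOL-Analysis.Analysis"
begin

definition C1_map :: "('a::euclidean_space \<Rightarrow> 'b::euclidean_space) \<Rightarrow> bool" where
  "C1_map g \<longleftrightarrow> (\<exists>g'. (\<forall>p. (g has_derivative blinfun_apply (g' p)) (at p)) \<and> continuous_on UNIV g')"

definition eigenvalues_C :: "real^'n^'n \<Rightarrow> complex set" where
  "eigenvalues_C A = {\<mu>. \<exists>v::complex^'n. v \<noteq> 0 \<and> map_matrix complex_of_real A *v v = \<mu> *s v}"

definition spec_rad :: "real^'n^'n \<Rightarrow> real" where
  "spec_rad A = Max (cmod ` eigenvalues_C A)"

definition Dx :: "(real^'l \<Rightarrow> real^'m \<Rightarrow> real^'l) \<Rightarrow> real^'l \<Rightarrow> real^'m \<Rightarrow> (real^'l \<Rightarrow> real^'l)" where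
  "Dx f x lam = frechet_derivative (\<lambda>y. f y lam) (at x)"

definition parameter_shift :: "(real \<Rightarrow> real^'m) \<Rightarrow> real^'m \<Rightarrow> real^'m \<Rightarrow> bool" where
  "parameter_shift Lam lm lp \<longleftrightarrow>
     Lam C1_differentiable_on UNIV \<and>
     (Lam \<longlongrightarrow> lp) at_top \<and> (Lam \<longlongrightarrow> lm) at_bot \<and>
     ((\<lambda>s. vector_derivative Lam (at s)) \<longlongrightarrow> 0) at_top \<and>
     ((\<lambda>s. vector_derivative Lam (at s)) \<longlongrightarrow> 0) at_bot"

definition stable_path ::
  "(real^'l \<Rightarrow> real^'m \<Rightarrow> real^'l) \<Rightarrow> (real \<Rightarrow> real^'m) \<Rightarrow> real^'m \<Rightarrow> real^'m \<Rightarrow> (real \<Rightarrow> real^'l) \<Rightarrow> bool" where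
  "stable_path f Lam lm lp X \<longleftrightarrow>
     (\<forall>s. f (X s) (Lam s) = X s) \<and>
     connected ((\<lambda>s. (s, X s)) ` UNIV) \<and>
     (\<exists>Xm Xp. (X \<longlongrightarrow> Xp) at_top \<and> (X \<longlongrightarrow> Xm) at_bot \<and>
        f Xp lp = Xp \<and> f Xm lm = Xm \<and>
        spec_rad (matrix (Dx f Xp lp)) < 1 \<and> spec_rad (matrix (Dx f Xm lm)) < 1) \<and>
     (\<forall>s. spec_rad (matrix (Dx f (X s) (Lam s))) < 1)"

definition Fr :: "(real^'l \<Rightarrow> real^'m \<Rightarrow> real^'l) \<Rightarrow> (real \<Rightarrow> real^'m) \<Rightarrow> real \<Rightarrow> (real \<times> (real^'l)) \<Rightarrow> (real \<times> (real^'l))" where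
  "Fr f Lam r = (\<lambda>(s, x). (s + r, f x (Lam s)))"

end

theory Submission
  imports Defs
begin

primrec prodL :: "(nat \<Rightarrow> ('a::real_normed_vector \<Rightarrow>\<^sub>L 'a)) \<Rightarrow> nat \<Rightarrow> ('a \<Rightarrow>\<^sub>L 'a)" where
  "prodL Q 0 = id_blinfun"
| "prodL Q (Suc n) = Q n o\<^sub>L prodL Q n"

primrec itr :: "('a \<Rightarrow> 'b \<Rightarrow> 'a) \<Rightarrow> (nat \<Rightarrow> 'b) \<Rightarrow> nat \<Rightarrow> 'a \<Rightarrow> 'a" where
  "itr f \<mu> 0 x = x"
| "itr f \<mu> (Suc n) x = f (itr f \<mu> n x) (\<mu> n)"

lemma prodL_pow_apply: "blinfun_apply (prodL (\<lambda>_. A) n) = (blinfun_apply A) ^^ n"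
  by (induction n) (auto simp: fun_eq_iff)

lemma prodL_est:
  fixes Q :: "nat \<Rightarrow> ('a::real_normed_vector \<Rightarrow>\<^sub>L 'a)"
  assumes "\<forall>k<n. norm (Q k - A) \<le> \<eta>" "\<forall>k<n. norm (Q k) \<le> K" "norm A \<le> K" "1 \<le> K" "0 \<le> \<eta>"
  shows "norm (prodL Q n - prodL (\<lambda>_. A) n) \<le> n * K^n * \<eta> \<and> norm (prodL Q n) \<le> K^n"
  using assms
proof (induction n)
  case 0
  then show ?case using norm_blinfun_id_le by simp
next
  case (Suc n)
  then have IH: "norm (prodL Q n - prodL (\<lambda>_. A) n) \<le> n * K^n * \<eta>" "norm (prodL Q n) \<le> K^n" by auto
  have QA: "norm (Q n - A) \<le> \<eta>" and Qn: "norm (Q n) \<le> K" using Suc.prems by auto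
  have eq: "prodL Q (Suc n) - prodL (\<lambda>_. A) (Suc n) = ((Q n - A) o\<^sub>L prodL Q n) + (A o\<^sub>L (prodL Q n - prodL (\<lambda>_. A) n))"
    by (rule blinfun_eqI) (simp add: blinfun.bilinear_simps)
  have Kn: "0 \<le> K^n" using Suc.prems by simp
  have "norm ((Q n - A) o\<^sub>L prodL Q n) \<le> \<eta> * K^n"
    by (rule order_trans[OF norm_blinfun_compose]) (intro mult_mono QA IH(2); use Suc.prems in simp)
  moreover have "norm (A o\<^sub>L (prodL Q n - prodL (\<lambda>_. A) n)) \<le> K * (n * K^n * \<eta>)"
    by (rule order_trans[OF norm_blinfun_compose]) (intro mult_mono IH(1) Suc.prems; use Suc.prems in simp)
  ultimately have "norm (prodL Q (Suc n) - prodL (\<lambda>_. A) (Suc n)) \<le> \<eta> * K^n + K * (n * K^n * \<eta>)"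
    unfolding eq by (rule order_trans[OF norm_triangle_ineq add_mono])
  also have "\<dots> \<le> Suc n * K^(Suc n) * \<eta>"
  proof -
    have "0 \<le> \<eta> * K^n" using Suc.prems Kn by simp
    then have "\<eta> * K^n * 1 \<le> \<eta> * K^n * K" using Suc.prems by (intro mult_left_mono) auto
    then show ?thesis by (simp add: algebra_simps)
  qed
  finally have 1: "norm (prodL Q (Suc n) - prodL (\<lambda>_. A) (Suc n)) \<le> Suc n * K^(Suc n) * \<eta>" .
  have "norm (prodL Q (Suc n)) \<le> K * K^n"
    by (simp, rule order_trans[OF norm_blinfun_compose]) (intro mult_mono Qn IH(2); use Suc.prems in simp)
  then show ?case using 1 by simp
qed


definition emb :: "'a::real_normed_vector \<Rightarrow>\<^sub>L ('a \<times> 'b::real_normed_vector)" where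
  "emb = Blinfun (\<lambda>v. (v, 0))"

lemma emb_apply[simp]: "blinfun_apply emb v = (v, 0)"
proof -
  have "bounded_linear (\<lambda>v::'a. (v, 0::'b))"
    by (intro bounded_linear_Pair bounded_linear_ident bounded_linear_zero)
  then show ?thesis unfolding emb_def by (simp add: bounded_linear_Blinfun_apply)
qed

lemma pair_close:
  assumes "dist x x0 < s" "dist l l0 < s"
  shows "dist (x, l) (x0, l0) < 2 * s"
proof -
  have "dist (x, l) (x0, l0) = sqrt ((dist x x0)\<^sup>2 + (dist l l0)\<^sup>2)" by (simp add: dist_Pair_Pair)
  also have "\<dots> \<le> dist x x0 + dist l l0" by (rule sqrt_sum_squares_le_sum) auto
  finally show ?thesis using assms by simp
qed

locale c1 =
  fixes f :: "'a::euclidean_space \<Rightarrow> 'b::euclidean_space \<Rightarrow> 'a"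
    and g' :: "'a \<times> 'b \<Rightarrow> ('a \<times> 'b) \<Rightarrow>\<^sub>L 'a"
  assumes der: "\<And>p. ((\<lambda>p. f (fst p) (snd p)) has_derivative blinfun_apply (g' p)) (at p)"
    and gcont: "continuous_on UNIV g'"
begin

definition P :: "'a \<times> 'b \<Rightarrow> 'a \<Rightarrow>\<^sub>L 'a" where "P p = g' p o\<^sub>L emb"

lemma fcont: "continuous_on UNIV (\<lambda>p. f (fst p) (snd p))"
  using der has_derivative_continuous continuous_at_imp_continuous_on by blast

lemma Pcont: "continuous_on UNIV P"
proof -
  have "bounded_linear (\<lambda>B::('a \<times> 'b) \<Rightarrow>\<^sub>L 'a. B o\<^sub>L emb)"
    by (rule bounded_bilinear.bounded_linear_left[OF bounded_bilinear_blinfun_compose])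
  then have "continuous_on UNIV (\<lambda>B::('a \<times> 'b) \<Rightarrow>\<^sub>L 'a. B o\<^sub>L emb)"
    by (simp add: linear_continuous_on)
  from continuous_on_compose2[OF this gcont subset_UNIV] show ?thesis unfolding P_def .
qed

lemma partial_der: "((\<lambda>y. f y l) has_derivative blinfun_apply (P (x, l))) (at x)"
proof -
  have 1: "((\<lambda>y. (y, l)) has_derivative (\<lambda>v. (v, 0))) (at x)"
    by (intro has_derivative_Pair has_derivative_ident has_derivative_const)
  have "((\<lambda>y. (\<lambda>p. f (fst p) (snd p)) (y, l)) has_derivative (\<lambda>v. blinfun_apply (g' (x, l)) (v, 0))) (at x)"
    using has_derivative_compose[OF 1 der] by simp
  moreover have "(\<lambda>v. blinfun_apply (g' (x, l)) (v, 0)) = blinfun_apply (P (x, l))"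
    by (simp add: P_def fun_eq_iff)
  ultimately show ?thesis by simp
qed

lemma Dx_eq: "frechet_derivative (\<lambda>y. f y l) (at x) = blinfun_apply (P (x, l))"
  using frechet_derivative_at[OF partial_der] by simp

lemma itr_der:
  "((itr f \<mu> n) has_derivative blinfun_apply (prodL (\<lambda>k. P (itr f \<mu> k x, \<mu> k)) n)) (at x)"
proof (induction n)
  case 0
  have "itr f \<mu> 0 = (\<lambda>y. y)" by (simp add: fun_eq_iff)
  then show ?case by (simp add: has_derivative_ident)
next
  case (Suc n)
  have e: "itr f \<mu> (Suc n) = (\<lambda>y. f (itr f \<mu> n y) (\<mu> n))" by (simp add: fun_eq_iff)
  show ?case unfolding e
    using has_derivative_compose[OF Suc.IH partial_der[of "\<mu> n" "itr f \<mu> n x"]]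
    by (simp add: o_def)
qed

lemma itr_cont_param: "continuous_on UNIV (\<lambda>l. itr f (\<lambda>_. l) n w)"
proof (induction n)
  case 0 then show ?case by simp
next
  case (Suc n)
  have "continuous_on UNIV (\<lambda>l. (itr f (\<lambda>_. l) n w, l))"
    by (intro continuous_on_Pair Suc.IH continuous_on_id)
  from continuous_on_compose2[OF fcont this] show ?case by simp
qed

lemma itr_const_commute: "itr f (\<lambda>_. l) n (f x l) = f (itr f (\<lambda>_. l) n x) l"
  by (induction n) auto

lemma itr_fixed: "f x l = x \<Longrightarrow> itr f (\<lambda>_. l) n x = x"
  by (induction n) auto

lemma prodL_fixed: "f x l = x \<Longrightarrow> prodL (\<lambda>k. P (itr f (\<lambda>_. l) k x, l)) n = prodL (\<lambda>_. P (x, l)) n"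
  by (simp add: itr_fixed)

lemma close_lemma:
  assumes UCf: "\<forall>\<rho>>0. \<exists>\<sigma>>0. \<forall>x0 l0 x l. (x0,l0) \<in> B \<and> dist x x0 < \<sigma> \<and> dist l l0 < \<sigma> \<longrightarrow> dist (f x l) x0 < \<rho>"
  shows "\<forall>\<rho>>0. \<exists>c>0. \<forall>x0 l0 \<mu> x. (x0,l0) \<in> B \<and> (\<forall>k<n. dist (\<mu> k) l0 < c) \<and> dist x x0 < c
            \<longrightarrow> (\<forall>k\<le>n. dist (itr f \<mu> k x) x0 < \<rho>)"
proof (induction n)
  case 0
  then show ?case by (metis itr.simps(1) le_zero_eq)
next
  case (Suc n)
  show ?case
  proof (intro allI impI)
    fix \<rho> :: real assume "\<rho> > 0"
    obtain \<sigma> where s: "\<sigma> > 0" "\<forall>x0 l0 x l. (x0,l0) \<in> B \<and> dist x x0 < \<sigma> \<and> dist l l0 < \<sigma> \<longrightarrow> dist (f x l) x0 < \<rho>"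
      using UCf \<open>\<rho> > 0\<close> by blast
    obtain c where c: "c > 0" "\<forall>x0 l0 \<mu> x. (x0,l0) \<in> B \<and> (\<forall>k<n. dist (\<mu> k) l0 < c) \<and> dist x x0 < c
            \<longrightarrow> (\<forall>k\<le>n. dist (itr f \<mu> k x) x0 < min \<rho> \<sigma>)"
      using Suc.IH \<open>\<rho> > 0\<close> s(1) by (metis min_less_iff_conj)
    show "\<exists>c>0. \<forall>x0 l0 \<mu> x. (x0,l0) \<in> B \<and> (\<forall>k<Suc n. dist (\<mu> k) l0 < c) \<and> dist x x0 < c
            \<longrightarrow> (\<forall>k\<le>Suc n. dist (itr f \<mu> k x) x0 < \<rho>)"
    proof (intro exI[of _ "min c \<sigma>"] conjI allI impI)
      show "min c \<sigma> > 0" using c s by simp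
      fix x0 l0 \<mu> x k
      assume H: "(x0,l0) \<in> B \<and> (\<forall>k<Suc n. dist (\<mu> k) l0 < min c \<sigma>) \<and> dist x x0 < min c \<sigma>"
        and k: "k \<le> Suc n"
      have Hn: "\<forall>k<n. dist (\<mu> k) l0 < c" "dist x x0 < c" "(x0,l0) \<in> B" using H by auto
      have A: "\<forall>k\<le>n. dist (itr f \<mu> k x) x0 < min \<rho> \<sigma>" using c(2) Hn by blast
      show "dist (itr f \<mu> k x) x0 < \<rho>"
      proof (cases "k \<le> n")
        case True then show ?thesis using A by auto
      next
        case False
        then have "k = Suc n" using k by simp
        moreover have "dist (f (itr f \<mu> n x) (\<mu> n)) x0 < \<rho>"
          using s(2) A H by auto
        ultimately show ?thesis by simp
      qed
    qed
  qed
qed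

lemma est_lemma:
  assumes UCf: "\<forall>\<rho>>0. \<exists>\<sigma>>0. \<forall>x0 l0 x l. (x0,l0) \<in> B \<and> dist x x0 < \<sigma> \<and> dist l l0 < \<sigma> \<longrightarrow> dist (f x l) x0 < \<rho>"
    and UCP: "\<forall>\<rho>>0. \<exists>\<sigma>>0. \<forall>x0 l0 x l. (x0,l0) \<in> B \<and> dist x x0 < \<sigma> \<and> dist l l0 < \<sigma> \<longrightarrow> norm (P (x,l) - P (x0,l0)) < \<rho>"
    and BND: "\<exists>K\<ge>1. \<exists>\<rho>0>0. \<forall>x0 l0 x l. (x0,l0) \<in> B \<and> dist x x0 < \<rho>0 \<and> dist l l0 < \<rho>0 \<longrightarrow> norm (P (x,l)) \<le> K"
    and "\<eta> > 0"
  shows "\<exists>c>0. \<forall>x0 l0 \<mu> x. (x0,l0) \<in> B \<and> (\<forall>k<n. dist (\<mu> k) l0 < c) \<and> dist x x0 < c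
            \<longrightarrow> norm (prodL (\<lambda>k. P (itr f \<mu> k x, \<mu> k)) n - prodL (\<lambda>_. P (x0, l0)) n) \<le> \<eta>"
proof -
  obtain K \<rho>0 where K: "K \<ge> 1" "\<rho>0 > 0"
    "\<forall>x0 l0 x l. (x0,l0) \<in> B \<and> dist x x0 < \<rho>0 \<and> dist l l0 < \<rho>0 \<longrightarrow> norm (P (x,l)) \<le> K"
    using BND by blast
  define \<eta>' where "\<eta>' = \<eta> / (n * K^n + 1)"
  have Kn: "0 \<le> n * K^n" using K by simp
  have \<eta>'pos: "\<eta>' > 0" unfolding \<eta>'_def using \<open>\<eta> > 0\<close> Kn by simp
  have \<eta>'le: "n * K^n * \<eta>' \<le> \<eta>"
  proof -
    have "n * K^n * \<eta>' = \<eta> * (n * K^n / (n * K^n + 1))" unfolding \<eta>'_def by simp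
    also have "\<dots> \<le> \<eta> * 1" using Kn \<open>\<eta> > 0\<close> by (intro mult_left_mono) auto
    finally show ?thesis by simp
  qed
  obtain \<sigma> where s: "\<sigma> > 0" "\<forall>x0 l0 x l. (x0,l0) \<in> B \<and> dist x x0 < \<sigma> \<and> dist l l0 < \<sigma> \<longrightarrow> norm (P (x,l) - P (x0,l0)) < \<eta>'"
    using UCP \<eta>'pos by blast
  define \<rho> where "\<rho> = min \<sigma> \<rho>0"
  have \<rho>pos: "\<rho> > 0" using s K by (simp add: \<rho>_def)
  obtain c1 where c1: "c1 > 0" "\<forall>x0 l0 \<mu> x. (x0,l0) \<in> B \<and> (\<forall>k<n. dist (\<mu> k) l0 < c1) \<and> dist x x0 < c1
            \<longrightarrow> (\<forall>k\<le>n. dist (itr f \<mu> k x) x0 < \<rho>)"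
    using close_lemma[OF UCf, of n] \<rho>pos by blast
  show ?thesis
  proof (intro exI[of _ "min c1 \<rho>"] conjI allI impI)
    show "min c1 \<rho> > 0" using c1 \<rho>pos by simp
    fix x0 l0 \<mu> x
    assume H: "(x0,l0) \<in> B \<and> (\<forall>k<n. dist (\<mu> k) l0 < min c1 \<rho>) \<and> dist x x0 < min c1 \<rho>"
    have Hn: "\<forall>k<n. dist (\<mu> k) l0 < c1" "dist x x0 < c1" "(x0,l0) \<in> B" using H by auto
    have it: "\<forall>k\<le>n. dist (itr f \<mu> k x) x0 < \<rho>" using c1(2) Hn by blast
    have "norm (prodL (\<lambda>k. P (itr f \<mu> k x, \<mu> k)) n - prodL (\<lambda>_. P (x0, l0)) n) \<le> n * K^n * \<eta>'"
    proof (rule conjunct1[OF prodL_est])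
      show "\<forall>k<n. norm (P (itr f \<mu> k x, \<mu> k) - P (x0, l0)) \<le> \<eta>'"
        using s(2) it H by (auto simp: \<rho>_def intro: less_imp_le)
      show "\<forall>k<n. norm (P (itr f \<mu> k x, \<mu> k)) \<le> K"
      proof (intro allI impI)
        fix k assume "k < n"
        then have "dist (itr f \<mu> k x) x0 < \<rho>0" "dist (\<mu> k) l0 < \<rho>0" using it H by (auto simp: \<rho>_def)
        then show "norm (P (itr f \<mu> k x, \<mu> k)) \<le> K" using K(3) H by blast
      qed
      show "norm (P (x0, l0)) \<le> K" using K(2) K(3) Hn(3) by (metis dist_self)
    qed (use K \<eta>'pos in auto)
    then show "norm (prodL (\<lambda>k. P (itr f \<mu> k x, \<mu> k)) n - prodL (\<lambda>_. P (x0, l0)) n) \<le> \<eta>"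
      using \<eta>'le by linarith
  qed
qed

lemma UC_lemma:
  assumes "bounded B" "\<forall>x0 l0. (x0,l0) \<in> B \<longrightarrow> f x0 l0 = x0"
  shows "\<forall>\<rho>>0. \<exists>\<sigma>>0. \<forall>x0 l0 x l. (x0,l0) \<in> B \<and> dist x x0 < \<sigma> \<and> dist l l0 < \<sigma> \<longrightarrow> dist (f x l) x0 < \<rho>"
    and "\<forall>\<rho>>0. \<exists>\<sigma>>0. \<forall>x0 l0 x l. (x0,l0) \<in> B \<and> dist x x0 < \<sigma> \<and> dist l l0 < \<sigma> \<longrightarrow> norm (P (x,l) - P (x0,l0)) < \<rho>"
    and "\<exists>K\<ge>1. \<exists>\<rho>0>0. \<forall>x0 l0 x l. (x0,l0) \<in> B \<and> dist x x0 < \<rho>0 \<and> dist l l0 < \<rho>0 \<longrightarrow> norm (P (x,l)) \<le> K"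
proof -
  obtain R where R: "\<forall>p\<in>B. norm p \<le> R" using assms(1) bounded_iff by blast
  define Kc where "Kc = cball (0::'a \<times> 'b) (R + 2)"
  have cK: "compact Kc" unfolding Kc_def by simp
  have inK: "(x, l) \<in> Kc \<and> (x0, l0) \<in> Kc" if "(x0,l0) \<in> B" "dist x x0 < 1" "dist l l0 < 1" for x0 l0 x l
  proof -
    have "dist (x, l) (x0, l0) < 2" using pair_close[OF that(2,3)] by simp
    moreover have "norm (x0, l0) \<le> R" using R that(1) by auto
    ultimately have "norm (x, l) \<le> R + 2"
      using norm_triangle_ineq2[of "(x,l)" "(x0,l0)"] by (simp add: dist_norm)
    then show ?thesis unfolding Kc_def using \<open>norm (x0, l0) \<le> R\<close> by auto
  qed
  have ucf: "uniformly_continuous_on Kc (\<lambda>p. f (fst p) (snd p))"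
    by (rule compact_uniformly_continuous[OF continuous_on_subset[OF fcont] cK]) simp
  have ucP: "uniformly_continuous_on Kc P"
    by (rule compact_uniformly_continuous[OF continuous_on_subset[OF Pcont] cK]) simp
  show "\<forall>\<rho>>0. \<exists>\<sigma>>0. \<forall>x0 l0 x l. (x0,l0) \<in> B \<and> dist x x0 < \<sigma> \<and> dist l l0 < \<sigma> \<longrightarrow> dist (f x l) x0 < \<rho>"
  proof (intro allI impI)
    fix \<rho> :: real assume "\<rho> > 0"
    then obtain d where d: "d > 0" "\<forall>p\<in>Kc. \<forall>p'\<in>Kc. dist p' p < d \<longrightarrow> dist (f (fst p') (snd p')) (f (fst p) (snd p)) < \<rho>"
      using ucf unfolding uniformly_continuous_on_def by metis
    show "\<exists>\<sigma>>0. \<forall>x0 l0 x l. (x0,l0) \<in> B \<and> dist x x0 < \<sigma> \<and> dist l l0 < \<sigma> \<longrightarrow> dist (f x l) x0 < \<rho>"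
    proof (intro exI[of _ "min (d/2) 1"] conjI allI impI)
      show "min (d/2) 1 > 0" using d by simp
      fix x0 l0 x l assume H: "(x0,l0) \<in> B \<and> dist x x0 < min (d/2) 1 \<and> dist l l0 < min (d/2) 1"
      then have "(x, l) \<in> Kc" "(x0, l0) \<in> Kc" using inK by auto
      moreover have "dist (x, l) (x0, l0) < d" using pair_close[of x x0 "min (d/2) 1" l l0] H by simp
      ultimately have "dist (f x l) (f x0 l0) < \<rho>" using d(2) by (metis fst_conv snd_conv)
      then show "dist (f x l) x0 < \<rho>" using assms(2) H by simp
    qed
  qed
  show "\<forall>\<rho>>0. \<exists>\<sigma>>0. \<forall>x0 l0 x l. (x0,l0) \<in> B \<and> dist x x0 < \<sigma> \<and> dist l l0 < \<sigma> \<longrightarrow> norm (P (x,l) - P (x0,l0)) < \<rho>"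
  proof (intro allI impI)
    fix \<rho> :: real assume "\<rho> > 0"
    then obtain d where d: "d > 0" "\<forall>p\<in>Kc. \<forall>p'\<in>Kc. dist p' p < d \<longrightarrow> dist (P p') (P p) < \<rho>"
      using ucP unfolding uniformly_continuous_on_def by metis
    show "\<exists>\<sigma>>0. \<forall>x0 l0 x l. (x0,l0) \<in> B \<and> dist x x0 < \<sigma> \<and> dist l l0 < \<sigma> \<longrightarrow> norm (P (x,l) - P (x0,l0)) < \<rho>"
    proof (intro exI[of _ "min (d/2) 1"] conjI allI impI)
      show "min (d/2) 1 > 0" using d by simp
      fix x0 l0 x l assume H: "(x0,l0) \<in> B \<and> dist x x0 < min (d/2) 1 \<and> dist l l0 < min (d/2) 1"
      then have "(x, l) \<in> Kc" "(x0, l0) \<in> Kc" using inK by auto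
      moreover have "dist (x, l) (x0, l0) < d" using pair_close[of x x0 "min (d/2) 1" l l0] H by simp
      ultimately have "dist (P (x,l)) (P (x0,l0)) < \<rho>" using d(2) by blast
      then show "norm (P (x,l) - P (x0,l0)) < \<rho>" by (simp add: dist_norm)
    qed
  qed
  have "compact (P ` Kc)" by (rule compact_continuous_image[OF continuous_on_subset[OF Pcont] cK]) simp
  then obtain K0 where K0: "\<forall>y\<in>P ` Kc. norm y \<le> K0" using compact_imp_bounded bounded_iff by metis
  show "\<exists>K\<ge>1. \<exists>\<rho>0>0. \<forall>x0 l0 x l. (x0,l0) \<in> B \<and> dist x x0 < \<rho>0 \<and> dist l l0 < \<rho>0 \<longrightarrow> norm (P (x,l)) \<le> K"
  proof (rule exI[of _ "max 1 K0"], intro conjI)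
    show "\<exists>\<rho>0>0. \<forall>x0 l0 x l. (x0,l0) \<in> B \<and> dist x x0 < \<rho>0 \<and> dist l l0 < \<rho>0 \<longrightarrow> norm (P (x,l)) \<le> max 1 K0"
    proof (rule exI[of _ 1], intro conjI allI impI)
      fix x0 l0 x l assume H: "(x0,l0) \<in> B \<and> dist x x0 < 1 \<and> dist l l0 < 1"
      then have "(x, l) \<in> Kc" using inK by auto
      then show "norm (P (x,l)) \<le> max 1 K0" using K0 by (meson image_eqI le_max_iff_disj)
    qed auto
  qed auto
qed

end

context c1 begin
lemma lip_lemma:
  assumes "\<forall>x. dist x x0 < rr \<longrightarrow> norm (prodL (\<lambda>k. P (itr f (\<lambda>_. l) k x, l)) N) \<le> q"
    and "d < rr" "x \<in> cball x0 d" "y \<in> cball x0 d"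
  shows "norm (itr f (\<lambda>_. l) N x - itr f (\<lambda>_. l) N y) \<le> q * norm (x - y)"
proof (rule differentiable_bound[where S="cball x0 d" and f'="\<lambda>x. blinfun_apply (prodL (\<lambda>k. P (itr f (\<lambda>_. l) k x, l)) N)"])
  show "convex (cball x0 d)" by simp
  show "\<And>x. x \<in> cball x0 d \<Longrightarrow> (itr f (\<lambda>_. l) N has_derivative blinfun_apply (prodL (\<lambda>k. P (itr f (\<lambda>_. l) k x, l)) N)) (at x within cball x0 d)"
    by (rule has_derivative_at_withinI, rule itr_der)
  show "\<And>x. x \<in> cball x0 d \<Longrightarrow> onorm (blinfun_apply (prodL (\<lambda>k. P (itr f (\<lambda>_. l) k x, l)) N)) \<le> q"
  proof -
    fix x assume "x \<in> cball x0 d"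
    then have "dist x x0 < rr" using assms(2) by (simp add: dist_commute)
    then have "norm (prodL (\<lambda>k. P (itr f (\<lambda>_. l) k x, l)) N) \<le> q" using assms(1) by blast
    then show "onorm (blinfun_apply (prodL (\<lambda>k. P (itr f (\<lambda>_. l) k x, l)) N)) \<le> q"
      by (simp only: norm_blinfun.rep_eq)
  qed
  show "x \<in> cball x0 d" by (rule assms(3))
  show "y \<in> cball x0 d" by (rule assms(4))
qed
lemma box_lambda:
  assumes fx0: "f x0 l0 = x0" and a1: "norm (prodL (\<lambda>_. P (x0,l0)) N) < 1"
  shows "\<exists>c>0. \<exists>\<delta>>0. \<exists>z. (\<forall>l. dist l l0 < c \<longrightarrow> f (z l) l = z l \<and> dist (z l) x0 < \<delta>
            \<and> norm (prodL (\<lambda>_. P (z l, l)) N) < 1)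
          \<and> (\<forall>l x. dist l l0 < c \<and> dist x x0 < \<delta> \<and> f x l = x \<longrightarrow> x = z l)
          \<and> continuous_on (ball l0 c) z"
proof -
  define a where "a = norm (prodL (\<lambda>_. P (x0,l0)) N)"
  define q where "q = (1 + a) / 2"
  have a0: "0 \<le> a" "a < 1" using a1 by (auto simp: a_def)
  have q: "0 \<le> q" "q < 1" "a + (1 - a) / 2 = q" using a0 by (auto simp: q_def field_simps)
  define B where "B = {(x0, l0)}"
  have bB: "bounded B" and fB: "\<forall>x0' l0'. (x0',l0') \<in> B \<longrightarrow> f x0' l0' = x0'" using fx0 by (auto simp: B_def)
  note UC = UC_lemma[OF bB fB]
  obtain cA where cA: "cA > 0" "\<forall>x0' l0' \<mu> x. (x0',l0') \<in> B \<and> (\<forall>k<N. dist (\<mu> k) l0' < cA) \<and> dist x x0' < cA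
            \<longrightarrow> norm (prodL (\<lambda>k. P (itr f \<mu> k x, \<mu> k)) N - prodL (\<lambda>_. P (x0', l0')) N) \<le> (1 - a) / 2"
    using est_lemma[OF UC, of "(1 - a)/2" N] a0 by auto
  have nq: "norm (prodL (\<lambda>k. P (itr f (\<lambda>_. l) k x, l)) N) \<le> q" if "dist l l0 < cA" "dist x x0 < cA" for l x
  proof -
    have "norm (prodL (\<lambda>k. P (itr f (\<lambda>_. l) k x, l)) N - prodL (\<lambda>_. P (x0, l0)) N) \<le> (1 - a) / 2"
      using cA(2) that by (auto simp: B_def)
    then show ?thesis using norm_triangle_ineq2[of "prodL (\<lambda>k. P (itr f (\<lambda>_. l) k x, l)) N" "prodL (\<lambda>_. P (x0, l0)) N"]
      q(3) unfolding a_def by linarith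
  qed
  define \<delta>' where "\<delta>' = cA / 2"
  have \<delta>'pos: "\<delta>' > 0" "\<delta>' < cA" using cA by (auto simp: \<delta>'_def)
  obtain c2 where c2: "c2 > 0" "\<forall>x l. dist x x0 < c2 \<and> dist l l0 < c2 \<longrightarrow> dist (f x l) x0 < \<delta>'"
    using UC(1) \<delta>'pos by (auto simp: B_def)
  define \<delta> where "\<delta> = min c2 \<delta>' / 2"
  have \<delta>pos: "\<delta> > 0" "\<delta> < \<delta>'" "\<delta> < c2" using c2 \<delta>'pos by (auto simp: \<delta>_def)
  have qd: "(1 - q) * \<delta> > 0" using q \<delta>pos by simp
  obtain c3 where c3: "c3 > 0" "\<forall>\<mu> x. (\<forall>k<N. dist (\<mu> k) l0 < c3) \<and> dist x x0 < c3
            \<longrightarrow> (\<forall>k\<le>N. dist (itr f \<mu> k x) x0 < (1 - q) * \<delta>)"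
    using close_lemma[OF UC(1), of N] qd by (auto simp: B_def)
  define c where "c = min cA (min c2 c3)"
  have cpos: "c > 0" using cA c2 c3 by (simp add: c_def)
  define h where "h l = itr f (\<lambda>_. l) N" for l
  have Lip: "norm (h l x - h l y) \<le> q * norm (x - y)" if "dist l l0 < c" "x \<in> cball x0 \<delta>'" "y \<in> cball x0 \<delta>'" for l x y
    unfolding h_def
    by (rule lip_lemma[where rr=cA]) (use nq that \<delta>'pos in \<open>auto simp: c_def\<close>)
  have ex: "\<exists>x. dist x x0 \<le> \<delta> \<and> f x l = x \<and> (\<forall>y. dist y x0 < \<delta>' \<and> f y l = y \<longrightarrow> y = x)"
    if l: "dist l l0 < c" for l
  proof -
    have h0: "dist (h l x0) x0 < (1 - q) * \<delta>"
      using c3(2)[rule_format, of "\<lambda>_. l" x0] l c3(1) by (auto simp: c_def h_def)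
    have self: "h l ` cball x0 \<delta> \<subseteq> cball x0 \<delta>"
    proof
      fix y assume "y \<in> h l ` cball x0 \<delta>"
      then obtain x where x: "x \<in> cball x0 \<delta>" "y = h l x" by auto
      have "dist (h l x) (h l x0) \<le> q * dist x x0"
        using Lip[OF l, of x x0] x \<delta>pos by (simp add: dist_norm dist_commute)
      also have "\<dots> \<le> q * \<delta>" using x q by (intro mult_left_mono) (auto simp: dist_commute)
      finally have "dist (h l x) x0 \<le> q * \<delta> + (1 - q) * \<delta>"
        using h0 dist_triangle[of "h l x" x0 "h l x0"] by linarith
      then show "y \<in> cball x0 \<delta>" using x by (simp add: dist_commute algebra_simps)
    qed
    have "\<exists>!x\<in>cball x0 \<delta>. h l x = x"
    proof (rule Banach_fix[OF _ _ q(1) q(2) self])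
      show "complete (cball x0 \<delta>)" by (simp add: complete_eq_closed)
      show "cball x0 \<delta> \<noteq> {}" using \<delta>pos by simp
      fix x y assume "x \<in> cball x0 \<delta>" "y \<in> cball x0 \<delta>"
      then show "dist (h l x) (h l y) \<le> q * dist x y"
        using Lip[OF l, of x y] \<delta>pos by (simp add: dist_norm)
    qed
    then obtain z where z: "z \<in> cball x0 \<delta>" "h l z = z" by auto
    have uniq: "y = z" if "y \<in> cball x0 \<delta>'" "h l y = y" for y
    proof -
      have "norm (y - z) \<le> q * norm (y - z)" using Lip[OF l that(1), of z] z \<delta>pos that(2)
        by (simp add: dist_commute)
      then have "norm (y - z) \<le> 0" using q by (smt (verit) mult_le_cancel_right1 norm_ge_zero)
      then show ?thesis by simp
    qed
    have fz: "f z l = z"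
    proof -
      have "dist (f z l) x0 < \<delta>'" using c2(2) z l \<delta>pos by (auto simp: c_def dist_commute)
      moreover have "h l (f z l) = f z l" using z(2) by (simp add: h_def itr_const_commute)
      ultimately show ?thesis using uniq[of "f z l"] by (simp add: dist_commute)
    qed
    show ?thesis
    proof (intro exI[of _ z] conjI allI impI)
      show "dist z x0 \<le> \<delta>" using z by (simp add: dist_commute)
      show "f z l = z" by fact
      fix y assume "dist y x0 < \<delta>' \<and> f y l = y"
      then show "y = z" using uniq itr_fixed by (auto simp: h_def dist_commute)
    qed
  qed
  define z where "z l = (THE x. dist x x0 < \<delta>' \<and> f x l = x)" for l
  have zprop: "dist (z l) x0 \<le> \<delta> \<and> f (z l) l = z l \<and> (\<forall>y. dist y x0 < \<delta>' \<and> f y l = y \<longrightarrow> y = z l)"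
    if l: "dist l l0 < c" for l
  proof -
    obtain x where x: "dist x x0 \<le> \<delta>" "f x l = x" "\<forall>y. dist y x0 < \<delta>' \<and> f y l = y \<longrightarrow> y = x"
      using ex[OF l] by blast
    have "z l = x" unfolding z_def
      by (rule the_equality) (use x \<delta>pos in auto)
    then show ?thesis using x by simp
  qed
  have hz: "h l (z l) = z l" if "dist l l0 < c" for l
    using zprop[OF that] itr_fixed by (simp add: h_def)
  show ?thesis
  proof (rule exI[of _ c], rule conjI[OF cpos], rule exI[of _ \<delta>'], rule conjI[OF \<delta>'pos(1)],
      rule exI[of _ z], intro conjI allI impI)
    fix l assume l: "dist l l0 < c"
    show "f (z l) l = z l" using zprop[OF l] by simp
    show "dist (z l) x0 < \<delta>'" using zprop[OF l] \<delta>pos by simp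
    have "norm (prodL (\<lambda>_. P (z l, l)) N) \<le> q"
      using nq[of l "z l"] prodL_fixed[of "z l" l N] zprop[OF l] l \<delta>pos \<delta>'pos by (simp add: c_def)
    then show "norm (prodL (\<lambda>_. P (z l, l)) N) < 1" using q by simp
  next
    fix l x assume "dist l l0 < c \<and> dist x x0 < \<delta>' \<and> f x l = x"
    then show "x = z l" using zprop by blast
  next
    show "continuous_on (ball l0 c) z"
    proof (rule continuous_at_imp_continuous_on, intro ballI)
      fix l' assume l': "l' \<in> ball l0 c"
      then have l'd: "dist l' l0 < c" by (simp add: dist_commute)
      define w where "w = z l'"
      have bound: "norm (z l - z l') \<le> norm (h l w - h l' w) / (1 - q)" if l: "l \<in> ball l0 c" for l
      proof -
        have ld: "dist l l0 < c" using l by (simp add: dist_commute)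
        have zc: "z l \<in> cball x0 \<delta>'" "w \<in> cball x0 \<delta>'"
          using zprop[OF ld] zprop[OF l'd] \<delta>pos by (auto simp: w_def dist_commute)
        have "norm (z l - z l') = norm ((h l (z l) - h l w) + (h l w - h l' w))"
          using hz[OF ld] hz[OF l'd] by (simp add: w_def)
        also have "\<dots> \<le> norm (h l (z l) - h l w) + norm (h l w - h l' w)" by (rule norm_triangle_ineq)
        also have "\<dots> \<le> q * norm (z l - z l') + norm (h l w - h l' w)"
          using Lip[OF ld zc] by (simp add: w_def)
        finally have "(1 - q) * norm (z l - z l') \<le> norm (h l w - h l' w)" by (simp add: algebra_simps)
        then show ?thesis using q by (simp add: field_simps)
      qed
      have "isCont (\<lambda>l. itr f (\<lambda>_. l) N w) l'"
        using itr_cont_param[of N w] continuous_on_eq_continuous_at[OF open_UNIV] by blast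
      then have "((\<lambda>l. h l w) \<longlongrightarrow> h l' w) (at l')"
        unfolding isCont_def h_def .
      then have "((\<lambda>l. h l w - h l' w) \<longlongrightarrow> 0) (at l')" by (rule LIM_zero)
      then have tz: "((\<lambda>l. norm (h l w - h l' w) / (1 - q)) \<longlongrightarrow> 0) (at l')"
        by (rule tendsto_divide_zero[OF tendsto_norm_zero])
      have ev: "\<forall>\<^sub>F l in at l'. norm (z l - z l') \<le> norm (h l w - h l' w) / (1 - q)"
        unfolding eventually_at_topological using l' bound by (intro exI[of _ "ball l0 c"]) auto
      have "((\<lambda>l. z l - z l') \<longlongrightarrow> 0) (at l')"
        by (rule Lim_null_comparison[OF ev tz])
      then show "isCont z l'" unfolding isCont_def by (rule LIM_zero_cancel)
    qed
  qed
qed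

end


lemma seg_real: "closed_segment (a::real) b = {min a b..max a b}"
  by (auto simp: closed_segment_eq_real_ivl)

locale sys = c1 f g' for f :: "'a::euclidean_space \<Rightarrow> 'b::euclidean_space \<Rightarrow> 'a" and g' +
  fixes Lam :: "real \<Rightarrow> 'b" and X :: "real \<Rightarrow> 'a" and N :: nat
  assumes Lcont: "continuous_on UNIV Lam"
    and Xfix: "\<And>s. f (X s) (Lam s) = X s"
    and Xstab: "\<And>s. norm (prodL (\<lambda>_. P (X s, Lam s)) N) < 1"
    and conn: "connected ((\<lambda>s. (s, X s)) ` UNIV)"
begin

definition Sset :: "(real \<times> 'a) set" where
  "Sset = {(t, x). f x (Lam t) = x \<and> norm (prodL (\<lambda>_. P (x, Lam t)) N) < 1}"

lemma box_t:
  assumes "(t0, x0) \<in> Sset"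
  shows "\<exists>\<eta>>0. \<exists>\<delta>>0. \<exists>\<psi>. continuous_on (ball t0 \<eta>) \<psi> \<and> \<psi> t0 = x0 \<and> (\<forall>u\<in>ball t0 \<eta>. (u, \<psi> u) \<in> Sset)
     \<and> (\<forall>u\<in>ball t0 \<eta>. \<forall>x. dist x x0 < \<delta> \<and> f x (Lam u) = x \<longrightarrow> x = \<psi> u)"
proof -
  have fx0: "f x0 (Lam t0) = x0" and a1: "norm (prodL (\<lambda>_. P (x0, Lam t0)) N) < 1"
    using assms by (auto simp: Sset_def)
  obtain c \<delta> z where c: "c > 0" "\<delta> > 0"
    and zp: "\<forall>l. dist l (Lam t0) < c \<longrightarrow> f (z l) l = z l \<and> dist (z l) x0 < \<delta> \<and> norm (prodL (\<lambda>_. P (z l, l)) N) < 1"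
    and zu: "\<forall>l x. dist l (Lam t0) < c \<and> dist x x0 < \<delta> \<and> f x l = x \<longrightarrow> x = z l"
    and zc: "continuous_on (ball (Lam t0) c) z"
    using box_lambda[OF fx0 a1] by blast
  have "isCont Lam t0" using Lcont continuous_on_eq_continuous_at[OF open_UNIV] by blast
  then obtain \<eta> where \<eta>: "\<eta> > 0" "\<forall>u. dist u t0 < \<eta> \<longrightarrow> dist (Lam u) (Lam t0) < c"
    unfolding continuous_at_eps_delta using c(1) by blast
  have img: "Lam ` ball t0 \<eta> \<subseteq> ball (Lam t0) c" using \<eta> by (auto simp: dist_commute)
  show ?thesis
  proof (rule exI[of _ \<eta>], rule conjI[OF \<eta>(1)], rule exI[of _ \<delta>], rule conjI[OF c(2)],
      rule exI[of _ "\<lambda>u. z (Lam u)"], intro conjI ballI allI impI)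
    show "continuous_on (ball t0 \<eta>) (\<lambda>u. z (Lam u))"
      by (rule continuous_on_compose2[OF zc continuous_on_subset[OF Lcont] img]) simp
    show "z (Lam t0) = x0" using zu[rule_format, of "Lam t0" x0] fx0 c by simp
  next
    fix u assume "u \<in> ball t0 \<eta>"
    then have "dist (Lam u) (Lam t0) < c" using \<eta>(2) by (metis dist_commute mem_ball)
    then show "(u, z (Lam u)) \<in> Sset" using zp by (simp add: Sset_def)
  next
    fix u x assume "u \<in> ball t0 \<eta>" "dist x x0 < \<delta> \<and> f x (Lam u) = x"
    then have "dist (Lam u) (Lam t0) < c" "dist x x0 < \<delta>" "f x (Lam u) = x" using \<eta>(2) by (auto simp: dist_commute)
    then show "x = z (Lam u)" using zu by blast
  qed
qed

lemma curve_unique: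
  fixes C :: "real set"
  assumes "connected C" "continuous_on C y1" "continuous_on C y2"
    and "\<forall>u\<in>C. (u, y1 u) \<in> Sset \<and> (u, y2 u) \<in> Sset" "a \<in> C" "y1 a = y2 a"
  shows "\<forall>u\<in>C. y1 u = y2 u"
proof -
  define Z where "Z = {u \<in> C. y1 u - y2 u = 0}"
  have cl: "closedin (top_of_set C) Z" unfolding Z_def
    by (rule continuous_closedin_preimage_constant, intro continuous_on_diff assms(2,3))
  have op: "openin (top_of_set C) Z"
    unfolding openin_euclidean_subtopology_iff
  proof (intro conjI ballI)
    show "Z \<subseteq> C" by (auto simp: Z_def)
    fix u assume u: "u \<in> Z"
    then have uC: "u \<in> C" and eq: "y1 u = y2 u" by (auto simp: Z_def)
    have "(u, y1 u) \<in> Sset" using assms(4) uC by blast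
    from box_t[OF this] obtain \<eta> \<delta> \<psi> where bx: "\<eta> > 0" "\<delta> > 0"
      "\<forall>v\<in>ball u \<eta>. \<forall>x. dist x (y1 u) < \<delta> \<and> f x (Lam v) = x \<longrightarrow> x = \<psi> v" by blast
    obtain d1 where d1: "d1 > 0" "\<forall>v\<in>C. dist v u < d1 \<longrightarrow> dist (y1 v) (y1 u) < \<delta>"
      using assms(2) uC bx(2) unfolding continuous_on_iff by blast
    obtain d2 where d2: "d2 > 0" "\<forall>v\<in>C. dist v u < d2 \<longrightarrow> dist (y2 v) (y2 u) < \<delta>"
      using assms(3) uC bx(2) unfolding continuous_on_iff by blast
    show "\<exists>e>0. \<forall>v\<in>C. dist v u < e \<longrightarrow> v \<in> Z"
    proof (rule exI[of _ "min \<eta> (min d1 d2)"], intro conjI ballI impI)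
      show "min \<eta> (min d1 d2) > 0" using bx d1 d2 by simp
      fix v assume vC: "v \<in> C" and dv: "dist v u < min \<eta> (min d1 d2)"
      then have vb: "v \<in> ball u \<eta>" by (simp add: dist_commute)
      have f1: "f (y1 v) (Lam v) = y1 v" and f2: "f (y2 v) (Lam v) = y2 v"
        using assms(4) vC by (auto simp: Sset_def)
      have "y1 v = \<psi> v" using bx(3) vb f1 d1 vC dv by auto
      moreover have "y2 v = \<psi> v" using bx(3) vb f2 d2 vC dv eq by auto
      ultimately show "v \<in> Z" using vC by (simp add: Z_def)
    qed
  qed
  have "a \<in> Z" using assms(5,6) by (simp add: Z_def)
  then have "Z = C" using assms(1) cl op unfolding connected_clopen by blast
  then show ?thesis by (auto simp: Z_def)
qed

definition br :: "real \<Rightarrow> (real \<Rightarrow> 'a) \<Rightarrow> bool" where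
  "br t y \<longleftrightarrow> continuous_on (closed_segment 0 t) y \<and> y 0 = X 0 \<and> (\<forall>u\<in>closed_segment 0 t. (u, y u) \<in> Sset)"

lemma transfer:
  assumes \<psi>c: "continuous_on (ball t0 \<eta>) \<psi>" and \<psi>S: "\<forall>u\<in>ball t0 \<eta>. (u, \<psi> u) \<in> Sset"
    and ab: "a \<in> ball t0 \<eta>" "b \<in> ball t0 \<eta>" and y: "br a y" "y a = \<psi> a"
  shows "\<exists>y'. br b y' \<and> y' b = \<psi> b"
proof -
  have cvx: "convex (ball t0 \<eta>)" by simp
  have cases: "b \<in> closed_segment 0 a \<or> a \<in> closed_segment 0 b \<or> 0 \<in> closed_segment a b"
    by (auto simp: seg_real)
  from y have yc: "continuous_on (closed_segment 0 a) y" and y0: "y 0 = X 0"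
    and yS: "\<forall>u\<in>closed_segment 0 a. (u, y u) \<in> Sset" by (auto simp: br_def)
  consider "b \<in> closed_segment 0 a" | "a \<in> closed_segment 0 b" | "0 \<in> closed_segment a b"
    using cases by blast
  then show ?thesis
  proof cases
    case 1
    have s1: "closed_segment b a \<subseteq> closed_segment 0 a"
      by (rule closed_segment_subset[OF 1]) auto
    have s2: "closed_segment b a \<subseteq> ball t0 \<eta>" by (rule closed_segment_subset[OF ab(2,1) cvx])
    have "\<forall>u\<in>closed_segment b a. y u = \<psi> u"
      by (rule curve_unique[where a=a]) (use s1 s2 yc \<psi>c yS \<psi>S y(2) in \<open>auto intro: continuous_on_subset\<close>)
    then have yb: "y b = \<psi> b" by auto
    have s3: "closed_segment 0 b \<subseteq> closed_segment 0 a"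
      by (rule closed_segment_subset[OF _ 1]) auto
    have "br b y" unfolding br_def using s3 yc y0 yS by (auto intro: continuous_on_subset)
    then show ?thesis using yb by blast
  next
    case 2
    define y' where "y' u = (if u \<in> closed_segment 0 a then y u else \<psi> u)" for u
    have un: "closed_segment 0 b = closed_segment 0 a \<union> closed_segment a b"
      using 2 by (auto simp: seg_real)
    have int: "u = a" if "u \<in> closed_segment 0 a" "u \<in> closed_segment a b" for u
      using 2 that by (auto simp: seg_real)
    have s2: "closed_segment a b \<subseteq> ball t0 \<eta>" by (rule closed_segment_subset[OF ab cvx])
    have c1': "continuous_on (closed_segment 0 a) y'"
      using yc by (rule continuous_on_eq) (simp add: y'_def)
    have c2': "continuous_on (closed_segment a b) y'"
    proof (rule continuous_on_eq[OF continuous_on_subset[OF \<psi>c s2]])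
      fix u assume "u \<in> closed_segment a b"
      then show "\<psi> u = y' u" using int[of u] y(2) by (cases "u \<in> closed_segment 0 a") (auto simp: y'_def)
    qed
    have "br b y'" unfolding br_def
    proof (intro conjI ballI)
      show "continuous_on (closed_segment 0 b) y'" unfolding un
        by (rule continuous_on_closed_Un[OF _ _ c1' c2']) auto
      show "y' 0 = X 0" using y0 by (simp add: y'_def)
      fix u assume "u \<in> closed_segment 0 b"
      then show "(u, y' u) \<in> Sset" using un yS \<psi>S s2 by (auto simp: y'_def)
    qed
    moreover have "y' b = \<psi> b" using int[of b] y(2) by (auto simp: y'_def)
    ultimately show ?thesis by blast
  next
    case 3
    have s2: "closed_segment a b \<subseteq> ball t0 \<eta>" by (rule closed_segment_subset[OF ab cvx])
    then have z: "0 \<in> ball t0 \<eta>" using 3 by blast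
    have s1: "closed_segment 0 a \<subseteq> ball t0 \<eta>" by (rule closed_segment_subset[OF z ab(1) cvx])
    have "\<forall>u\<in>closed_segment 0 a. y u = \<psi> u"
      by (rule curve_unique[where a=a]) (use s1 yc \<psi>c yS \<psi>S y(2) in \<open>auto intro: continuous_on_subset\<close>)
    then have p0: "\<psi> 0 = X 0" using y0 by auto
    have s3: "closed_segment 0 b \<subseteq> ball t0 \<eta>" by (rule closed_segment_subset[OF z ab(2) cvx])
    have "br b \<psi>" unfolding br_def using s3 \<psi>c \<psi>S p0 by (auto intro: continuous_on_subset)
    then show ?thesis by blast
  qed
qed

end


context sys begin

definition Th :: "real set" where "Th = {t. \<exists>y. br t y \<and> y t = X t}"

lemma XS: "(t, X t) \<in> Sset" using Xfix Xstab by (simp add: Sset_def)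

lemma loc: "\<exists>e>0. \<forall>t'. dist t' t < e \<and> dist (X t') (X t) < e \<longrightarrow> (t \<in> Th \<longleftrightarrow> t' \<in> Th)"
proof -
  obtain \<eta> \<delta> \<psi> where bx: "\<eta> > 0" "\<delta> > 0" "continuous_on (ball t \<eta>) \<psi>" "\<psi> t = X t"
    "\<forall>u\<in>ball t \<eta>. (u, \<psi> u) \<in> Sset" "\<forall>u\<in>ball t \<eta>. \<forall>x. dist x (X t) < \<delta> \<and> f x (Lam u) = x \<longrightarrow> x = \<psi> u"
    using box_t[OF XS[of t]] by blast
  show ?thesis
  proof (rule exI[of _ "min \<eta> \<delta>"], intro conjI allI impI)
    show "min \<eta> \<delta> > 0" using bx by simp
    fix t' assume H: "dist t' t < min \<eta> \<delta> \<and> dist (X t') (X t) < min \<eta> \<delta>"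
    then have t'b: "t' \<in> ball t \<eta>" by (simp add: dist_commute)
    have tb: "t \<in> ball t \<eta>" using bx by simp
    have Xt': "X t' = \<psi> t'" using bx(6) t'b H Xfix by auto
    show "t \<in> Th \<longleftrightarrow> t' \<in> Th"
    proof
      assume "t \<in> Th"
      then obtain y where "br t y" "y t = \<psi> t" using bx(4) by (auto simp: Th_def)
      from transfer[OF bx(3) bx(5) tb t'b this] show "t' \<in> Th" using Xt' by (auto simp: Th_def)
    next
      assume "t' \<in> Th"
      then obtain y where "br t' y" "y t' = \<psi> t'" using Xt' by (auto simp: Th_def)
      from transfer[OF bx(3) bx(5) t'b tb this] show "t \<in> Th" using bx(4) by (auto simp: Th_def)
    qed
  qed
qed

lemma Th_UNIV: "Th = UNIV"
proof (rule ccontr)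
  assume nU: "Th \<noteq> UNIV"
  define G where "G = (\<lambda>s. (s, X s)) ` (UNIV :: real set)"
  define E1 where "E1 = (\<lambda>s. (s, X s)) ` Th"
  define E2 where "E2 = (\<lambda>s. (s, X s)) ` (- Th)"
  have opn: "openin (top_of_set G) ((\<lambda>s. (s, X s)) ` A)" if A: "A = Th \<or> A = - Th" for A
    unfolding openin_euclidean_subtopology_iff
  proof (intro conjI ballI)
    show "(\<lambda>s. (s, X s)) ` A \<subseteq> G" by (auto simp: G_def)
    fix p assume "p \<in> (\<lambda>s. (s, X s)) ` A"
    then obtain t where t: "t \<in> A" "p = (t, X t)" by auto
    obtain e where e: "e > 0" "\<forall>t'. dist t' t < e \<and> dist (X t') (X t) < e \<longrightarrow> (t \<in> Th \<longleftrightarrow> t' \<in> Th)"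
      using loc by blast
    show "\<exists>e>0. \<forall>p'\<in>G. dist p' p < e \<longrightarrow> p' \<in> (\<lambda>s. (s, X s)) ` A"
    proof (rule exI[of _ e], intro conjI ballI impI)
      show "e > 0" by fact
      fix p' assume "p' \<in> G" "dist p' p < e"
      then obtain t' where t': "p' = (t', X t')" by (auto simp: G_def)
      have "dist t' t < e" using dist_fst_le[of p' p] \<open>dist p' p < e\<close> t t' by simp
      moreover have "dist (X t') (X t) < e" using dist_snd_le[of p' p] \<open>dist p' p < e\<close> t t' by simp
      ultimately have "t \<in> Th \<longleftrightarrow> t' \<in> Th" using e by blast
      then have "t' \<in> A" using A t(1) by auto
      then show "p' \<in> (\<lambda>s. (s, X s)) ` A" using t' by auto
    qed
  qed
  have "0 \<in> Th"
  proof -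
    have "br 0 (\<lambda>_. X 0)" unfolding br_def using XS[of 0] by simp
    then show ?thesis by (auto simp: Th_def)
  qed
  then have "E1 \<noteq> {}" "E2 \<noteq> {}" using nU by (auto simp: E1_def E2_def)
  moreover have "G \<subseteq> E1 \<union> E2" "E1 \<inter> E2 = {}" by (auto simp: G_def E1_def E2_def)
  moreover have "openin (top_of_set G) E1" "openin (top_of_set G) E2"
    unfolding E1_def E2_def by (rule opn, simp)+
  ultimately show False using conn unfolding connected_openin G_def by blast
qed

lemma X_cont: "continuous_on UNIV X"
proof -
  have seg: "continuous_on (closed_segment 0 T) X" for T
  proof -
    obtain yT where yT: "br T yT" "yT T = X T" using Th_UNIV by (auto simp: Th_def)
    have "\<forall>t\<in>closed_segment 0 T. yT t = X t"
    proof
      fix t assume t: "t \<in> closed_segment 0 T"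
      obtain yt where yt: "br t yt" "yt t = X t" using Th_UNIV by (auto simp: Th_def)
      have sub: "closed_segment 0 t \<subseteq> closed_segment 0 T"
        by (rule closed_segment_subset[OF _ t]) auto
      have "\<forall>u\<in>closed_segment 0 t. yT u = yt u"
        by (rule curve_unique[where a=0]) (use yT yt sub in \<open>auto simp: br_def intro: continuous_on_subset\<close>)
      then show "yT t = X t" using yt by auto
    qed
    then show ?thesis using yT(1) unfolding br_def by (auto intro: continuous_on_eq)
  qed
  have "isCont X t" for t
  proof -
    define T where "T = \<bar>t\<bar> + 1"
    have "closed_segment 0 T \<union> closed_segment 0 (-T) = {-T..T}" by (auto simp: seg_real T_def)
    then have "continuous_on {-T..T} X" using continuous_on_closed_Un[OF _ _ seg seg] by (metis closed_segment)
    then have "continuous_on {-T<..<T} X" by (rule continuous_on_subset) auto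
    moreover have "t \<in> {-T<..<T}" by (auto simp: T_def)
    ultimately show ?thesis using continuous_on_eq_continuous_at[of "{-T<..<T}" X] by auto
  qed
  then show ?thesis by (simp add: continuous_at_imp_continuous_on)
qed

end


lemma bounded_range_lim:
  fixes g :: "real \<Rightarrow> 'a::real_normed_vector"
  assumes "continuous_on UNIV g" "(g \<longlongrightarrow> a) at_top" "(g \<longlongrightarrow> b) at_bot"
  shows "bounded (range g)"
proof -
  have "eventually (\<lambda>t. dist (g t) a < 1) at_top" using tendsto_iff[THEN iffD1, OF assms(2), rule_format, of 1] by simp
  then obtain T1 where T1: "\<forall>t\<ge>T1. dist (g t) a < 1" unfolding eventually_at_top_linorder by blast
  have "eventually (\<lambda>t. dist (g t) b < 1) at_bot" using tendsto_iff[THEN iffD1, OF assms(3), rule_format, of 1] by simp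
  then obtain T2 where T2: "\<forall>t\<le>T2. dist (g t) b < 1" unfolding eventually_at_bot_linorder by blast
  have "compact (g ` {T2..T1})"
    by (rule compact_continuous_image[OF continuous_on_subset[OF assms(1)]]) auto
  then have "bounded (g ` {T2..T1} \<union> ball a 1 \<union> ball b 1)" by (simp add: compact_imp_bounded)
  moreover have "range g \<subseteq> g ` {T2..T1} \<union> ball a 1 \<union> ball b 1"
  proof
    fix y assume "y \<in> range g"
    then obtain t where t: "y = g t" by auto
    show "y \<in> g ` {T2..T1} \<union> ball a 1 \<union> ball b 1"
    proof (cases "t \<ge> T1")
      case True then show ?thesis using T1 t by (auto simp: dist_commute)
    next
      case False
      show ?thesis
      proof (cases "t \<le> T2")
        case True then show ?thesis using T2 t by (auto simp: dist_commute)
      next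
        case False then show ?thesis using \<open>\<not> t \<ge> T1\<close> t by auto
      qed
    qed
  qed
  ultimately show ?thesis using bounded_subset by blast
qed

lemma unif_cont_lim:
  fixes g :: "real \<Rightarrow> 'a::real_normed_vector"
  assumes "continuous_on UNIV g" "(g \<longlongrightarrow> a) at_top" "(g \<longlongrightarrow> b) at_bot" "\<rho> > 0"
  shows "\<exists>\<sigma>>0. \<forall>s t. \<bar>s - t\<bar> < \<sigma> \<longrightarrow> dist (g s) (g t) < \<rho>"
proof -
  have "eventually (\<lambda>t. dist (g t) a < \<rho>/2) at_top" using tendsto_iff[THEN iffD1, OF assms(2), rule_format, of "\<rho>/2"] assms(4) by simp
  then obtain T1 where T1: "\<forall>t\<ge>T1. dist (g t) a < \<rho>/2" unfolding eventually_at_top_linorder by blast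
  have "eventually (\<lambda>t. dist (g t) b < \<rho>/2) at_bot" using tendsto_iff[THEN iffD1, OF assms(3), rule_format, of "\<rho>/2"] assms(4) by simp
  then obtain T2 where T2: "\<forall>t\<le>T2. dist (g t) b < \<rho>/2" unfolding eventually_at_bot_linorder by blast
  have "uniformly_continuous_on {T2-1..T1+1} g"
    by (rule compact_uniformly_continuous[OF continuous_on_subset[OF assms(1)]]) auto
  then obtain d where d: "d > 0" "\<forall>x\<in>{T2-1..T1+1}. \<forall>x'\<in>{T2-1..T1+1}. dist x' x < d \<longrightarrow> dist (g x') (g x) < \<rho>"
    unfolding uniformly_continuous_on_def using assms(4) by metis
  show ?thesis
  proof (rule exI[of _ "min d 1"], intro conjI allI impI)
    show "min d 1 > 0" using d by simp
    fix s t :: real assume st: "\<bar>s - t\<bar> < min d 1"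
    show "dist (g s) (g t) < \<rho>"
    proof (cases "s \<in> {T2-1..T1+1} \<and> t \<in> {T2-1..T1+1}")
      case True
      have "dist s t < d" using st by (simp add: dist_real_def)
      then show ?thesis using d(2) True by blast
    next
      case False
      then have "(s \<ge> T1 \<and> t \<ge> T1) \<or> (s \<le> T2 \<and> t \<le> T2)" using st by auto
      then show ?thesis
      proof
        assume "s \<ge> T1 \<and> t \<ge> T1"
        then have "dist (g s) a < \<rho>/2" "dist (g t) a < \<rho>/2" using T1 by auto
        then show ?thesis by (rule dist_triangle_half_l)
      next
        assume "s \<le> T2 \<and> t \<le> T2"
        then have "dist (g s) b < \<rho>/2" "dist (g t) b < \<rho>/2" using T2 by auto
        then show ?thesis by (rule dist_triangle_half_l)
      qed
    qed
  qed
qed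

lemma finite_choice_min:
  fixes Q :: "nat \<Rightarrow> real \<Rightarrow> bool"
  assumes "\<forall>n. \<exists>c>0. Q n c" "\<forall>n c c'. Q n c \<and> 0 < c' \<and> c' \<le> c \<longrightarrow> Q n c'"
  shows "\<exists>c>0. \<forall>n\<le>(M::nat). Q n c"
proof (induction M)
  case 0 then show ?case using assms(1) by auto
next
  case (Suc M)
  then obtain c where c: "c > 0" "\<forall>n\<le>M. Q n c" by blast
  obtain c' where c': "c' > 0" "Q (Suc M) c'" using assms(1) by blast
  have "\<forall>n\<le>Suc M. Q n (min c c')"
  proof (intro allI impI)
    fix n assume "n \<le> Suc M"
    then consider "n \<le> M" | "n = Suc M" by linarith
    then show "Q n (min c c')"
    proof cases
      case 1
      then have "Q n c" using c by blast
      moreover have "0 < min c c'" "min c c' \<le> c" using c c' by auto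
      ultimately show ?thesis using assms(2) by blast
    next
      case 2
      then have "Q n c'" using c' by blast
      moreover have "0 < min c c'" "min c c' \<le> c'" using c c' by auto
      ultimately show ?thesis using assms(2) by blast
    qed
  qed
  then show ?case using c c' by (intro exI[of _ "min c c'"]) auto
qed

lemma Fr_pow: "(Fr f Lam r ^^ n) (s, y) = (s + real n * r, itr f (\<lambda>k. Lam (s + real k * r)) n y)"
  by (induction n) (auto simp: Fr_def algebra_simps)


theorem mainTheorem14:
  fixes f :: "real^'l \<Rightarrow> real^'m \<Rightarrow> real^'l"
    and Lam :: "real \<Rightarrow> real^'m" and lm lp :: "real^'m"
    and X :: "real \<Rightarrow> real^'l" and N :: nat
  assumes "C1_map (\<lambda>p::((real^'l) \<times> (real^'m)). f (fst p) (snd p))"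
    and "parameter_shift Lam lm lp"
    and "stable_path f Lam lm lp X"
    and "\<forall>s. \<forall>n\<ge>N. onorm (Dx f (X s) (Lam s) ^^ n) < 1/4"
  shows "\<exists>r0>0. \<exists>e0>0. \<forall>r. 0 < r \<and> r < r0 \<longrightarrow> (\<forall>\<epsilon>. 0 < \<epsilon> \<and> \<epsilon> < e0 \<longrightarrow>
           (\<forall>n\<in>{N..N*(N+1)}. \<forall>s x. norm (x - X s) \<le> \<epsilon> \<longrightarrow>
              onorm (frechet_derivative (\<lambda>y. snd ((Fr f Lam r ^^ n) (s, y))) (at x)) < 1/2))"
proof -
  from assms(1) obtain g' where der: "\<forall>p. ((\<lambda>p. f (fst p) (snd p)) has_derivative blinfun_apply (g' p)) (at p)"
    and gc: "continuous_on UNIV g'" unfolding C1_map_def by blast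
  interpret C: c1 f g' using der gc by unfold_locales auto
  have Lc: "continuous_on UNIV Lam"
  proof -
    have "\<forall>x. Lam differentiable at x" using assms(2) unfolding parameter_shift_def C1_differentiable_on_eq by blast
    then show ?thesis by (simp add: continuous_at_imp_continuous_on differentiable_imp_continuous_within)
  qed
  have Llim: "(Lam \<longlongrightarrow> lp) at_top" "(Lam \<longlongrightarrow> lm) at_bot" using assms(2) unfolding parameter_shift_def by auto
  have Xfix: "\<And>s. f (X s) (Lam s) = X s" and conn: "connected ((\<lambda>s. (s, X s)) ` UNIV)"
    using assms(3) unfolding stable_path_def by auto
  obtain Xm Xp where Xlim: "(X \<longlongrightarrow> Xp) at_top" "(X \<longlongrightarrow> Xm) at_bot"
    using assms(3) unfolding stable_path_def by blast
  have hyp: "norm (prodL (\<lambda>_. C.P (X s, Lam s)) n) < 1/4" if "n \<ge> N" for s n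
  proof -
    have "Dx f (X s) (Lam s) ^^ n = blinfun_apply (prodL (\<lambda>_. C.P (X s, Lam s)) n)"
      unfolding Dx_def C.Dx_eq prodL_pow_apply ..
    moreover have "onorm (Dx f (X s) (Lam s) ^^ n) < 1/4" using assms(4) that by blast
    ultimately show ?thesis by (simp add: norm_blinfun.rep_eq)
  qed
  have stab: "norm (prodL (\<lambda>_. C.P (X s, Lam s)) N) < 1" for s
    using hyp[of N s] by simp
  interpret S: sys f g' Lam X N
    by unfold_locales (use Lc Xfix conn stab in auto)
  have Xc: "continuous_on UNIV X" by (rule S.X_cont)
  have bX: "bounded (range X)" by (rule bounded_range_lim[OF Xc Xlim])
  have bL: "bounded (range Lam)" by (rule bounded_range_lim[OF Lc Llim])
  define B where "B = (\<lambda>s. (X s, Lam s)) ` (UNIV :: real set)"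
  have bB: "bounded B"
    by (rule bounded_subset[OF bounded_Times[OF bX bL]]) (auto simp: B_def)
  have fB: "\<forall>x0 l0. (x0,l0) \<in> B \<longrightarrow> f x0 l0 = x0" using Xfix by (auto simp: B_def)
  note UC = C.UC_lemma[OF bB fB]
  define M where "M = N * (N + 1)"
  define Q where "Q n c \<longleftrightarrow> (\<forall>x0 l0 \<mu> x. (x0,l0) \<in> B \<and> (\<forall>k<n. dist (\<mu> k) l0 < c) \<and> dist x x0 < c
            \<longrightarrow> norm (prodL (\<lambda>k. C.P (itr f \<mu> k x, \<mu> k)) n - prodL (\<lambda>_. C.P (x0, l0)) n) \<le> 1/4)" for n c
  have "\<forall>n. \<exists>c>0. Q n c"
  proof
    fix n
    show "\<exists>c>0. Q n c" unfolding Q_def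
      by (rule C.est_lemma[OF UC(1) UC(2) UC(3)]) simp
  qed
  moreover have "\<forall>n c c'. Q n c \<and> 0 < c' \<and> c' \<le> c \<longrightarrow> Q n c'"
    unfolding Q_def by (meson less_le_trans)
  ultimately obtain c where c: "c > 0" "\<forall>n\<le>M. Q n c" using finite_choice_min by blast
  obtain \<sigma> where \<sigma>: "\<sigma> > 0" "\<forall>a b. \<bar>a - b\<bar> < \<sigma> \<longrightarrow> dist (Lam a) (Lam b) < c"
    using unif_cont_lim[OF Lc Llim c(1)] by blast
  define r0 where "r0 = \<sigma> / (real M + 1)"
  have r0: "r0 > 0" "(real M + 1) * r0 = \<sigma>" using \<sigma> by (auto simp: r0_def)
  show ?thesis
  proof (rule exI[of _ r0], rule conjI[OF r0(1)], rule exI[of _ c], rule conjI[OF c(1)], intro allI impI ballI)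
    fix r \<epsilon> n s x
    assume r: "0 < r \<and> r < r0" and \<epsilon>: "0 < \<epsilon> \<and> \<epsilon> < c" and n: "n \<in> {N..N*(N+1)}"
      and x: "norm (x - X s) \<le> \<epsilon>"
    define \<mu> where "\<mu> k = Lam (s + real k * r)" for k
    have nM: "n \<le> M" "N \<le> n" using n by (auto simp: M_def)
    have \<mu>c: "\<forall>k<n. dist (\<mu> k) (Lam s) < c"
    proof (intro allI impI)
      fix k assume "k < n"
      then have "real k \<le> real M" using nM by simp
      then have "real k * r \<le> real M * r" using r by (intro mult_right_mono) auto
      also have "\<dots> \<le> real M * r0" using r by (intro mult_left_mono) auto
      also have "\<dots> < (real M + 1) * r0" using r0 by (simp add: algebra_simps)
      finally have "\<bar>(s + real k * r) - s\<bar> < \<sigma>" using r r0 by simp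
      then show "dist (\<mu> k) (Lam s) < c" using \<sigma>(2) by (simp add: \<mu>_def)
    qed
    have xc: "dist x (X s) < c" using x \<epsilon> by (simp add: dist_norm)
    have "(X s, Lam s) \<in> B" by (simp add: B_def)
    then have est: "norm (prodL (\<lambda>k. C.P (itr f \<mu> k x, \<mu> k)) n - prodL (\<lambda>_. C.P (X s, Lam s)) n) \<le> 1/4"
      using c(2) nM(1) \<mu>c xc unfolding Q_def by blast
    have "norm (prodL (\<lambda>k. C.P (itr f \<mu> k x, \<mu> k)) n) < 1/2"
      using est hyp[OF nM(2), of s]
        norm_triangle_ineq2[of "prodL (\<lambda>k. C.P (itr f \<mu> k x, \<mu> k)) n" "prodL (\<lambda>_. C.P (X s, Lam s)) n"]
      by linarith
    moreover have "(\<lambda>y. snd ((Fr f Lam r ^^ n) (s, y))) = itr f \<mu> n"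
    proof -
      have \<mu>eq: "\<mu> = (\<lambda>k. Lam (s + real k * r))" by (rule ext) (simp add: \<mu>_def)
      show ?thesis unfolding \<mu>eq by (rule ext) (simp add: Fr_pow)
    qed
    moreover have "frechet_derivative (itr f \<mu> n) (at x) = blinfun_apply (prodL (\<lambda>k. C.P (itr f \<mu> k x, \<mu> k)) n)"
      using frechet_derivative_at[OF C.itr_der] by simp
    ultimately show "onorm (frechet_derivative (\<lambda>y. snd ((Fr f Lam r ^^ n) (s, y))) (at x)) < 1/2"
      by (simp add: norm_blinfun.rep_eq)
  qed
qed

end
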